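(* $\mathfrak{s}\leq\mathrm{non}^{*}(\mathrm{tr}(\mathcal{N}))\leq\mathrm{non}^{*}(\mathcal{Z})$.
   Context: $\mathfrak{s}$ is the splitting number. $\mathcal{N}$ is the ideal of Lebesgue null subsets of $2^\omega$; $\mathrm{tr}(\mathcal{N})$ is the ideal on $2^{<\omega}$ of those $A$ with $\{x\in2^{\omega}:x|_{n}\in A$ for infinitely many $n\}\in\mathcal{N}$. $\mathcal{Z}$ is the density zero ideal on $\omega$: $A\in\mathcal{Z}$ iff $\lim_n|A\cap n|/n=0$. For an ideal $\mathcal{J}$ on a countable set $X$, $\mathrm{non}^*(\mathcal{J})=\min\{|\mathcal{F}|:\mathcal{F}\subseteq[X]^{\omega}$ and for every $Y\in\mathcal{J}$ there is $F\in\mathcal{F}$ with $F\cap Y$ finite$\}$. *)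

theory Defs
  imports "HOL-Probability.Probability" "HOL-Library.Equipollence"
begin

text \<open>Cantor space 2^omega as nat => bool, with the fair coin-flipping product measure
  (the standard Lebesgue measure on 2^omega).\<close>
definition cantor_measure :: "(nat \<Rightarrow> bool) measure" where
  "cantor_measure = (\<Pi>\<^sub>M i\<in>(UNIV::nat set). measure_pmf (pmf_of_set (UNIV::bool set)))"

definition lebesgue_null :: "(nat \<Rightarrow> bool) set set" where
  "lebesgue_null = {A. \<exists>B \<in> null_sets cantor_measure. A \<subseteq> B}"

definition restr :: "(nat \<Rightarrow> bool) \<Rightarrow> nat \<Rightarrow> bool list" where
  "restr x n = map x [0..<n]"

definition trN :: "bool list set set" where
  "trN = {A. {x. \<exists>\<^sub>\<infinity> n. restr x n \<in> A} \<in> lebesgue_null}"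

definition densZ :: "nat set set" where
  "densZ = {A. (\<lambda>n. real (card (A \<inter> {..<n})) / real n) \<longlonglongrightarrow> 0}"

text \<open>F witnesses non*(J) for an ideal J on the countable set UNIV :: 'a set.\<close>
definition non_star_family :: "'a set set \<Rightarrow> 'a set set \<Rightarrow> bool" where
  "non_star_family J F \<longleftrightarrow> (\<forall>X\<in>F. infinite X) \<and> (\<forall>Y\<in>J. \<exists>X\<in>F. finite (X \<inter> Y))"

definition splitting_family :: "nat set set \<Rightarrow> bool" where
  "splitting_family S \<longleftrightarrow>
     (\<forall>A. infinite A \<longrightarrow> (\<exists>X\<in>S. infinite (A \<inter> X) \<and> infinite (A - X)))"

end

theory Submission
  imports Defs
begin


abbreviation "coin \<equiv> measure_pmf (pmf_of_set (UNIV::bool set))"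

lemma cantor_pps: "product_prob_space (\<lambda>_::nat. coin)"
  by unfold_locales

lemma space_cantor[simp]: "space cantor_measure = UNIV"
  by (simp add: cantor_measure_def space_PiM)

lemma prob_space_cantor: "prob_space cantor_measure"
  unfolding cantor_measure_def by (rule prob_space_PiM) (rule prob_space_measure_pmf)

lemma cyl_sets: "finite W \<Longrightarrow> {x. \<forall>i\<in>W. x i = v i} \<in> sets cantor_measure"
proof -
  assume W: "finite W"
  have "{x. \<forall>i\<in>W. x i = v i} = {x\<in>space cantor_measure. \<forall>i\<in>W. x i \<in> {v i}}" by auto
  also have "\<dots> = prod_emb UNIV (\<lambda>_::nat. coin) W (\<Pi>\<^sub>E i\<in>W. {v i})"
    unfolding cantor_measure_def
    apply (subst prod_emb_PiE)
      apply simp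
     apply simp
    apply (auto simp: space_PiM PiE_iff)
    by (metis singletonD)+
  also have "\<dots> \<in> sets cantor_measure" unfolding cantor_measure_def
    using W by (intro sets_PiM_I) auto
  finally show ?thesis .
qed

lemma cyl_emeasure: "finite W \<Longrightarrow> emeasure cantor_measure {x. \<forall>i\<in>W. x i = v i} = ennreal ((1/2)^card W)"
proof -
  assume W: "finite W"
  interpret P: product_prob_space "\<lambda>_::nat. coin" UNIV by (rule cantor_pps)
  have "{x. \<forall>i\<in>W. x i = v i} = {x\<in>space (PiM UNIV (\<lambda>_::nat. coin)). \<forall>i\<in>W. x i \<in> {v i}}"
    by (auto simp: space_PiM)
  then have "emeasure cantor_measure {x. \<forall>i\<in>W. x i = v i} = (\<Prod>i\<in>W. emeasure coin {v i})"
    unfolding cantor_measure_def using P.emeasure_PiM_Collect[of W "\<lambda>i. {v i}"] W by simp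
  also have "\<dots> = (\<Prod>i\<in>W. ennreal (1/2))"
    by (simp add: emeasure_pmf_single)
  also have "\<dots> = ennreal (\<Prod>i\<in>W. 1/2)"
    by (rule prod_ennreal) simp
  also have "\<dots> = ennreal ((1/2)^card W)"
    by simp
  finally show ?thesis .
qed


lemma restr_eq: "restr x n = s \<longleftrightarrow> length s = n \<and> (\<forall>i\<in>{..<n}. x i = s!i)"
  unfolding restr_def by (auto simp: list_eq_iff_nth_eq)

lemma level_finite: "finite {s::bool list. s \<in> Y \<and> length s = n}"
  by (rule finite_subset[OF _ finite_lists_length_eq[of "UNIV::bool set" n]]) auto

definition Lev :: "bool list set \<Rightarrow> nat \<Rightarrow> (nat \<Rightarrow> bool) set" where
  "Lev Y n = {x. restr x n \<in> Y}"

lemma Lev_union: "Lev Y n = (\<Union>s\<in>{s. s \<in> Y \<and> length s = n}. {x. \<forall>i\<in>{..<n}. x i = s!i})"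
proof (rule set_eqI)
  fix x
  show "x \<in> Lev Y n \<longleftrightarrow> x \<in> (\<Union>s\<in>{s. s \<in> Y \<and> length s = n}. {x. \<forall>i\<in>{..<n}. x i = s!i})"
  proof
    assume "x \<in> Lev Y n"
    then have "restr x n \<in> Y" unfolding Lev_def by simp
    moreover have "length (restr x n) = n \<and> (\<forall>i\<in>{..<n}. x i = restr x n ! i)"
      using restr_eq[of x n "restr x n"] by simp
    ultimately show "x \<in> (\<Union>s\<in>{s. s \<in> Y \<and> length s = n}. {x. \<forall>i\<in>{..<n}. x i = s!i})" by blast
  next
    assume "x \<in> (\<Union>s\<in>{s. s \<in> Y \<and> length s = n}. {x. \<forall>i\<in>{..<n}. x i = s!i})"
    then obtain s where "s \<in> Y" "length s = n" "\<forall>i\<in>{..<n}. x i = s!i" by blast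
    then have "restr x n = s" using restr_eq by blast
    with \<open>s \<in> Y\<close> show "x \<in> Lev Y n" unfolding Lev_def by simp
  qed
qed

lemma Lev_sets: "Lev Y n \<in> sets cantor_measure"
  unfolding Lev_union by (intro sets.finite_UN level_finite ballI cyl_sets) auto

lemma Lev_emeasure: "emeasure cantor_measure (Lev Y n) = ennreal (card {s. s \<in> Y \<and> length s = n} * (1/2)^n)"
proof -
  have "emeasure cantor_measure (Lev Y n) = (\<Sum>s\<in>{s. s \<in> Y \<and> length s = n}. emeasure cantor_measure {x. \<forall>i\<in>{..<n}. x i = s!i})"
    unfolding Lev_union
  proof (rule sum_emeasure[symmetric])
    show "(\<lambda>s. {x. \<forall>i\<in>{..<n}. x i = s ! i}) ` {s \<in> Y. length s = n} \<subseteq> sets cantor_measure"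
      using cyl_sets by blast
    show "disjoint_family_on (\<lambda>s. {x. \<forall>i\<in>{..<n}. x i = s ! i}) {s \<in> Y. length s = n}"
      unfolding disjoint_family_on_def
    proof (intro ballI impI)
      fix s t assume s: "s \<in> {s \<in> Y. length s = n}" and t: "t \<in> {s \<in> Y. length s = n}" and "s \<noteq> t"
      then obtain i where "i < n" "s!i \<noteq> t!i" by (auto simp: list_eq_iff_nth_eq)
      then show "{x. \<forall>i\<in>{..<n}. x i = s ! i} \<inter> {x. \<forall>i\<in>{..<n}. x i = t ! i} = {}" by auto
    qed
    show "finite {s \<in> Y. length s = n}" by (rule level_finite)
  qed
  also have "\<dots> = (\<Sum>s\<in>{s. s \<in> Y \<and> length s = n}. ennreal ((1/2)^n))"
    by (intro sum.cong refl) (simp add: cyl_emeasure)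
  also have "\<dots> = ennreal (card {s. s \<in> Y \<and> length s = n} * (1/2)^n)"
    by (simp add: ennreal_of_nat_eq_real_of_nat ennreal_mult)
  finally show ?thesis .
qed

lemma Lev_measure: "measure cantor_measure (Lev Y n) = card {s. s \<in> Y \<and> length s = n} / 2^n"
  using Lev_emeasure[of Y n] by (simp add: measure_def power_divide)

lemma trN_levels:
  assumes "Y \<in> trN"
  shows "(\<lambda>n. card {s. s \<in> Y \<and> length s = n} / 2^n) \<longlonglongrightarrow> 0"
proof -
  interpret P: prob_space cantor_measure by (rule prob_space_cantor)
  obtain B where B: "B \<in> null_sets cantor_measure" "{x. \<exists>\<^sub>\<infinity> n. restr x n \<in> Y} \<subseteq> B"
    using assms unfolding trN_def lebesgue_null_def by auto
  define U where "U m = (\<Union>n\<in>{m..}. Lev Y n)" for m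
  have U_sets: "U m \<in> sets cantor_measure" for m
    unfolding U_def using Lev_sets by blast
  have "decseq U" unfolding U_def decseq_def by (auto; meson atLeast_iff order_trans)
  then have lim: "(\<lambda>m. measure cantor_measure (U m)) \<longlonglongrightarrow> measure cantor_measure (\<Inter>m. U m)"
    using U_sets by (intro P.finite_Lim_measure_decseq) auto
  have "(\<Inter>m. U m) \<subseteq> {x. \<exists>\<^sub>\<infinity> n. restr x n \<in> Y}"
    unfolding U_def Lev_def INFM_nat_le by auto
  with B have "(\<Inter>m. U m) \<subseteq> B" by auto
  moreover have "(\<Inter>m. U m) \<in> sets cantor_measure"
    using U_sets by blast
  ultimately have "(\<Inter>m. U m) \<in> null_sets cantor_measure"
    using B(1) null_sets_subset by blast
  then have "measure cantor_measure (\<Inter>m. U m) = 0"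
    by (simp add: measure_eq_0_null_sets)
  with lim have lim0: "(\<lambda>m. measure cantor_measure (U m)) \<longlonglongrightarrow> 0" by simp
  show ?thesis
  proof (rule tendsto_sandwich[OF _ _ tendsto_const lim0])
    show "\<forall>\<^sub>F n in sequentially. 0 \<le> real (card {s \<in> Y. length s = n}) / 2 ^ n" by simp
    show "\<forall>\<^sub>F n in sequentially. real (card {s \<in> Y. length s = n}) / 2 ^ n \<le> measure cantor_measure (U n)"
    proof (intro always_eventually allI)
      fix n
      have "measure cantor_measure (Lev Y n) \<le> measure cantor_measure (U n)"
        using U_sets by (intro P.finite_measure_mono) (auto simp: U_def)
      then show "real (card {s \<in> Y. length s = n}) / 2 ^ n \<le> measure cantor_measure (U n)"
        by (simp add: Lev_measure)
    qed
  qed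
qed



definition enc :: "bool list \<Rightarrow> nat" where
  "enc s = 2^length s - 1 + horner_sum of_bool 2 s"

lemma hs_less: "horner_sum of_bool 2 s < (2::nat)^length s"
proof -
  have "horner_sum of_bool 2 s = take_bit (length s) (horner_sum of_bool (2::nat) s)"
    by (simp add: take_bit_horner_sum_bit_eq)
  also have "\<dots> < 2^length s" by (rule take_bit_nat_less_exp)
  finally show ?thesis .
qed

lemma enc_lower: "2^length s - 1 \<le> enc s"
  by (simp add: enc_def)

lemma enc_upper: "enc s < 2^(Suc (length s)) - 1"
proof -
  have "(1::nat) \<le> 2^length s" by simp
  then show ?thesis using hs_less[of s] by (simp add: enc_def)
qed

lemma hs_inj: "length s = length t \<Longrightarrow> horner_sum of_bool (2::nat) s = horner_sum of_bool 2 t \<Longrightarrow> s = t"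
proof -
  assume l: "length s = length t" and h: "horner_sum of_bool (2::nat) s = horner_sum of_bool 2 t"
  have "s ! n = t ! n" if "n < length s" for n
  proof -
    have "bit (horner_sum of_bool (2::nat) s) n = bit (horner_sum of_bool (2::nat) t) n" using h by simp
    then show ?thesis using that l by (simp add: bit_horner_sum_bit_iff)
  qed
  with l show ?thesis by (simp add: list_eq_iff_nth_eq)
qed

lemma enc_inj: "inj enc"
proof (rule injI)
  fix s t assume e: "enc s = enc t"
  have "\<not> length s < length t" if "enc s = enc t" for s t
  proof
    assume "length s < length t"
    then have "Suc (length s) \<le> length t" by simp
    then have "(2::nat)^(Suc (length s)) \<le> 2^length t" by (rule power_increasing) simp
    then have "enc s < enc t" using enc_upper[of s] enc_lower[of t] by linarith
    with that show False by simp
  qed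
  with e have "length s = length t" by (metis nat_neq_iff)
  moreover have "2 ^ length t - 1 + horner_sum of_bool (2::nat) s = 2^length t - 1 + horner_sum of_bool 2 t"
    using e \<open>length s = length t\<close> unfolding enc_def by metis
  then have "horner_sum of_bool (2::nat) s = horner_sum of_bool 2 t" by (rule add_left_imp_eq)
  ultimately show "s = t" by (intro hs_inj)
qed

lemma enc_surj: "surj enc"
proof -
  have "m \<in> range enc" for m
  proof -
    have ex: "\<exists>n. m < 2^(Suc n) - 1"
    proof
      have "m < 2^m" by (rule less_exp)
      then have "m + 1 < 2^(Suc m)" by (simp only: power_Suc)
      then show "m < 2^(Suc m) - 1" by arith
    qed
    define n where "n = (LEAST n. m < 2^(Suc n) - 1)"
    have up: "m < 2^(Suc n) - 1" unfolding n_def by (rule LeastI_ex[OF ex])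
    have lo: "2^n - 1 \<le> m"
    proof (cases n)
      case 0 then show ?thesis by simp
    next
      case (Suc n')
      then have "\<not> m < 2^(Suc n') - 1" unfolding n_def using not_less_Least[of n' "\<lambda>n. m < 2^(Suc n) - 1"]
        by (metis lessI n_def)
      then show ?thesis using Suc by simp
    qed
    define r where "r = m - (2^n - 1)"
    have r: "r < 2^n" using up lo unfolding r_def by simp
    define s where "s = map (bit r) [0..<n]"
    have "horner_sum of_bool 2 s = take_bit n r" unfolding s_def by (rule horner_sum_bit_eq_take_bit)
    also have "\<dots> = r" using r by (simp add: take_bit_nat_eq_self_iff)
    finally have "enc s = m" using lo unfolding enc_def r_def s_def by simp
    then show ?thesis by (metis rangeI)
  qed
  then show ?thesis by auto
qed



lemma pow2_le_imp: "2^j \<le> (N::nat) \<Longrightarrow> j \<le> N"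
  using less_exp[of j] by linarith

lemma geom_sum2: "(\<Sum>j\<le>n. (2::real)^j) = 2^(Suc n) - 1"
  by (induction n) simp_all

lemma sum_D_bound: "(\<Sum>j\<in>{j. 2^j \<le> N}. (2::real)^j) \<le> 2 * real N"
proof (cases "{j::nat. 2^j \<le> N} = {}")
  case True then show ?thesis by simp
next
  case False
  have fin: "finite {j::nat. 2^j \<le> N}"
    by (rule finite_subset[of _ "{..N}"]) (auto intro: pow2_le_imp)
  define n where "n = Max {j::nat. 2^j \<le> N}"
  have n: "2^n \<le> N" using Max_in[OF fin False] unfolding n_def by simp
  have sub: "{j::nat. 2^j \<le> N} \<subseteq> {..n}" using Max_ge[OF fin] unfolding n_def by auto
  have "(\<Sum>j\<in>{j. 2^j \<le> N}. (2::real)^j) \<le> (\<Sum>j\<le>n. (2::real)^j)"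
    by (rule sum_mono2[OF _ sub]) auto
  also have "\<dots> = 2 * 2^n - 1" by (simp add: geom_sum2)
  also have "\<dots> \<le> 2 * real N"
  proof -
    have "(2::real)^n \<le> real N" using n by (metis of_nat_le_iff of_nat_numeral of_nat_power)
    then show ?thesis by linarith
  qed
  finally show ?thesis .
qed

lemma enc_dens:
  assumes "Y \<in> trN"
  shows "enc ` Y \<in> densZ"
proof -
  define y where "y j = real (card {s. s \<in> Y \<and> length s = j})" for j
  have ylim: "(\<lambda>j. y j / 2^j) \<longlonglongrightarrow> 0" unfolding y_def by (rule trN_levels[OF assms])
  have y0: "y j \<ge> 0" for j unfolding y_def by simp
  define D where "D N = {j::nat. (2::nat)^j \<le> N}" for N :: nat
  have finD: "finite (D N)" for N unfolding D_def
    by (rule finite_subset[of _ "{..N}"]) (auto intro: pow2_le_imp)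
  have card_bound: "real (card (enc ` Y \<inter> {..<N})) \<le> (\<Sum>j\<in>D N. y j)" for N
  proof -
    have sub: "enc ` Y \<inter> {..<N} \<subseteq> enc ` (\<Union>j\<in>D N. {s. s \<in> Y \<and> length s = j})"
    proof
      fix m assume "m \<in> enc ` Y \<inter> {..<N}"
      then obtain s where s: "s \<in> Y" "m = enc s" "enc s < N" by auto
      have "2^length s - 1 < N" using enc_lower[of s] s(3) by linarith
      moreover have "(1::nat) \<le> 2^length s" by simp
      ultimately have "2^length s \<le> N" by arith
      then have "length s \<in> D N" unfolding D_def by simp
      then have "s \<in> (\<Union>j\<in>D N. {s. s \<in> Y \<and> length s = j})" using s(1) by blast
      then show "m \<in> enc ` (\<Union>j\<in>D N. {s. s \<in> Y \<and> length s = j})" unfolding s(2) by (rule imageI)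
    qed
    have fin2: "finite (\<Union>j\<in>D N. {s. s \<in> Y \<and> length s = j})"
      using finD level_finite by blast
    have "card (enc ` Y \<inter> {..<N}) \<le> card (enc ` (\<Union>j\<in>D N. {s. s \<in> Y \<and> length s = j}))"
      by (rule card_mono[OF finite_imageI[OF fin2] sub])
    also have "\<dots> \<le> card (\<Union>j\<in>D N. {s. s \<in> Y \<and> length s = j})" by (rule card_image_le[OF fin2])
    also have "\<dots> \<le> (\<Sum>j\<in>D N. card {s. s \<in> Y \<and> length s = j})" by (rule card_UN_le[OF finD])
    finally have "card (enc ` Y \<inter> {..<N}) \<le> (\<Sum>j\<in>D N. card {s. s \<in> Y \<and> length s = j})" .
    then have "real (card (enc ` Y \<inter> {..<N})) \<le> real (\<Sum>j\<in>D N. card {s. s \<in> Y \<and> length s = j})"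
      by (rule of_nat_mono)
    then show ?thesis unfolding y_def by (simp only: of_nat_sum)
  qed
  show ?thesis unfolding densZ_def mem_Collect_eq
  proof (rule LIMSEQ_I)
    fix r :: real assume r: "0 < r"
    obtain J where J: "\<And>j. j \<ge> J \<Longrightarrow> norm (y j / 2^j - 0) < r/4"
      using LIMSEQ_D[OF ylim, of "r/4"] r by auto
    define C where "C = (\<Sum>j<J. y j)"
    have C0: "C \<ge> 0" unfolding C_def using y0 by (simp add: sum_nonneg)
    obtain N0 :: nat where N0: "real N0 > 2 * C / r" using reals_Archimedean2 by blast
    show "\<exists>no. \<forall>N\<ge>no. norm (real (card (enc ` Y \<inter> {..<N})) / real N - 0) < r"
    proof (intro exI allI impI)
      fix N assume N: "N \<ge> Suc N0"
      then have Npos: "real N > 0" by simp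
      have "(\<Sum>j\<in>D N. y j) = (\<Sum>j\<in>D N \<inter> {..<J}. y j) + (\<Sum>j\<in>D N - {..<J}. y j)"
        using finD by (metis sum.Int_Diff)
      also have "(\<Sum>j\<in>D N \<inter> {..<J}. y j) \<le> C"
        unfolding C_def by (rule sum_mono2) (auto simp: y0)
      also have "(\<Sum>j\<in>D N - {..<J}. y j) \<le> (\<Sum>j\<in>D N - {..<J}. r/4 * 2^j)"
      proof (rule sum_mono)
        fix j assume "j \<in> D N - {..<J}"
        then have "j \<ge> J" by auto
        then have "y j / 2^j < r/4" using J[of j] y0[of j] by simp
        then show "y j \<le> r/4 * 2^j" by (simp add: divide_less_eq less_imp_le)
      qed
      also have "\<dots> \<le> (\<Sum>j\<in>D N. r/4 * 2^j)"
        using finD r by (intro sum_mono2) auto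
      also have "\<dots> = r/4 * (\<Sum>j\<in>D N. 2^j)" by (simp add: sum_distrib_left)
      also have "\<dots> \<le> r/4 * (2 * real N)"
        using sum_D_bound[of N] r unfolding D_def by (intro mult_left_mono) auto
      finally have b: "(\<Sum>j\<in>D N. y j) \<le> C + r/2 * real N" by simp
      have "real (card (enc ` Y \<inter> {..<N})) / real N \<le> (C + r/2 * real N) / real N"
        using card_bound[of N] b Npos by (intro divide_right_mono) auto
      also have "\<dots> = C / real N + r/2" using Npos by (simp add: field_simps)
      also have "\<dots> < r"
      proof -
        have "real N > 2 * C / r" using N N0 by linarith
        then have "C / real N < r / 2" using Npos r by (simp add: field_simps)
        then show ?thesis by linarith
      qed
      finally show "norm (real (card (enc ` Y \<inter> {..<N})) / real N - 0) < r" by simp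
    qed
  qed
qed



lemma length_restr[simp]: "length (restr x n) = n"
  by (simp add: restr_def)

lemma nth_restr[simp]: "i < n \<Longrightarrow> restr x n ! i = x i"
  by (simp add: restr_def)

section \<open>Accumulation point\<close>

fun pre :: "bool list set \<Rightarrow> nat \<Rightarrow> bool list" where
  "pre X 0 = []"
| "pre X (Suc n) = (if infinite {t\<in>X. take (Suc n) t = pre X n @ [True]} then pre X n @ [True] else pre X n @ [False])"

lemma pre_Suc_ex: "\<exists>b. pre X (Suc n) = pre X n @ [b]"
  by auto

lemma length_pre[simp]: "length (pre X n) = n"
  by (induction n) auto

lemma pre_infinite:
  assumes "infinite X"
  shows "infinite {t\<in>X. take n t = pre X n}"
proof (induction n)
  case 0 then show ?case using assms by simp
next
  case (Suc n)
  let ?u = "pre X n"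
  have sub: "{t\<in>X. take n t = ?u} \<subseteq> {t\<in>X. take (Suc n) t = ?u @ [True]} \<union> {t\<in>X. take (Suc n) t = ?u @ [False]} \<union> {?u}"
  proof
    fix t assume t: "t \<in> {t\<in>X. take n t = ?u}"
    show "t \<in> {t\<in>X. take (Suc n) t = ?u @ [True]} \<union> {t\<in>X. take (Suc n) t = ?u @ [False]} \<union> {?u}"
    proof (cases "n < length t")
      case True
      then have "take (Suc n) t = take n t @ [t!n]" by (simp add: take_Suc_conv_app_nth)
      then show ?thesis using t by (cases "t!n") auto
    next
      case False
      then have "take n t = t" by simp
      then show ?thesis using t by auto
    qed
  qed
  show ?case
  proof (cases "infinite {t\<in>X. take (Suc n) t = ?u @ [True]}")
    case True then show ?thesis by simp
  next
    case False
    have "infinite ({t\<in>X. take (Suc n) t = ?u @ [True]} \<union> {t\<in>X. take (Suc n) t = ?u @ [False]} \<union> {?u})"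
      using Suc.IH sub finite_subset by blast
    with False have "infinite {t\<in>X. take (Suc n) t = ?u @ [False]}" by simp
    with False show ?thesis by simp
  qed
qed

definition acc :: "bool list set \<Rightarrow> nat \<Rightarrow> bool" where
  "acc X n = pre X (Suc n) ! n"

lemma restr_acc: "restr (acc X) n = pre X n"
proof (induction n)
  case 0 then show ?case by (simp add: restr_def)
next
  case (Suc n)
  obtain b where b: "pre X (Suc n) = pre X n @ [b]" using pre_Suc_ex by blast
  have ab: "acc X n = b" unfolding acc_def b by (simp add: nth_append)
  have "restr (acc X) (Suc n) = restr (acc X) n @ [acc X n]" by (simp add: restr_def)
  also have "\<dots> = pre X n @ [b]" using Suc ab by simp
  finally show ?case using b by simp
qed

lemma acc_infinite:
  assumes "infinite X"
  shows "infinite {t\<in>X. take n t = restr (acc X) n}"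
  using pre_infinite[OF assms] by (simp add: restr_acc)

section \<open>The rate function and intervals\<close>

definition rho :: "bool list set \<Rightarrow> nat \<Rightarrow> nat" where
  "rho X b = (LEAST l. \<exists>t\<in>X. take b t = restr (acc X) b \<and> length t = l)"

lemma rho_ex:
  assumes "infinite X"
  shows "\<exists>t\<in>X. take b t = restr (acc X) b \<and> length t = rho X b"
proof -
  obtain t where "t \<in> X" "take b t = restr (acc X) b"
    using acc_infinite[OF assms, of b] not_finite_existsD by auto
  then have "\<exists>l. \<exists>t\<in>X. take b t = restr (acc X) b \<and> length t = l" by blast
  then show ?thesis unfolding rho_def by (rule LeastI_ex)
qed

definition rho' :: "bool list set \<Rightarrow> nat \<Rightarrow> nat" where
  "rho' X q = Suc (Max (rho X ` {..q}) + q)"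

lemma rho'_gt: "p \<le> q \<Longrightarrow> rho X p < rho' X q"
  unfolding rho'_def by (simp add: le_imp_less_Suc trans_le_add1)

lemma rho'_gt2: "q < rho' X q"
  unfolding rho'_def by simp

fun qs :: "bool list set \<Rightarrow> nat \<Rightarrow> nat" where
  "qs X 0 = 0"
| "qs X (Suc i) = rho' X (qs X i)"

lemma qs_strict: "strict_mono (qs X)"
  by (rule strict_monoI_Suc) (simp add: rho'_gt2)

lemma qs_ge: "i \<le> qs X i"
  using qs_strict by (rule strict_mono_imp_increasing)

definition idx :: "bool list set \<Rightarrow> nat \<Rightarrow> nat" where
  "idx X n = (LEAST i. n < qs X (Suc i))"

lemma idx_ex: "\<exists>i. n < qs X (Suc i)"
  using qs_ge[of "Suc n" X] Suc_le_eq by blast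

lemma idx_upper: "n < qs X (Suc (idx X n))"
  unfolding idx_def by (rule LeastI_ex[OF idx_ex])

lemma idx_lower: "qs X (idx X n) \<le> n"
proof (cases "idx X n")
  case 0 then show ?thesis by simp
next
  case (Suc k)
  then have "\<not> n < qs X (Suc k)"
    using not_less_Least[of k "\<lambda>i. n < qs X (Suc i)"] unfolding idx_def by auto
  then show ?thesis using Suc by simp
qed

lemma idx_le: "n < qs X (Suc k) \<Longrightarrow> idx X n \<le> k"
  unfolding idx_def by (rule Least_le)

lemma idx_le_self: "idx X n \<le> n"
  using idx_lower[of X n] qs_ge[of "idx X n" X] by linarith

lemma idx_ge: "qs X k \<le> n \<Longrightarrow> k \<le> idx X n"
proof (rule ccontr)
  assume "qs X k \<le> n" "\<not> k \<le> idx X n"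
  then have "Suc (idx X n) \<le> k" by simp
  then have "qs X (Suc (idx X n)) \<le> qs X k" using strict_mono_less_eq[OF qs_strict] by blast
  with idx_upper[of n X] \<open>qs X k \<le> n\<close> show False by simp
qed

definition Ev :: "bool list set \<Rightarrow> nat set" where
  "Ev X = {n. even (idx X n)}"

definition sig0 :: "bool list set \<Rightarrow> nat set" where
  "sig0 X = {n. acc X n}"

definition splits :: "nat set \<Rightarrow> nat set \<Rightarrow> bool" where
  "splits A s \<longleftrightarrow> infinite (A \<inter> s) \<and> infinite (A - s)"

section \<open>The test set\<close>

definition YA :: "nat set \<Rightarrow> bool list set" where
  "YA A = {s. \<exists>j. enumerate A (2*j) \<le> length s \<and> length s < enumerate A (2*j+2) \<and>
      (\<forall>w\<in>enumerate A ` {j..<2*j}. \<forall>w'\<in>enumerate A ` {j..<2*j}. s!w = s!w')}"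


lemma cyl_measure: "finite W \<Longrightarrow> measure cantor_measure {x. \<forall>i\<in>W. x i = v i} = (1/2)^card W"
  using cyl_emeasure[of W v] by (simp add: measure_def)

lemma YA_trN:
  assumes infA: "infinite A"
  shows "YA A \<in> trN"
proof -
  interpret P: prob_space cantor_measure by (rule prob_space_cantor)
  define a where "a = enumerate A"
  have amono: "strict_mono a" unfolding a_def using infA by (rule strict_mono_enumerate)
  define W where "W j = a ` {j..<2*j}" for j
  have finW: "finite (W j)" for j unfolding W_def by simp
  have cardW: "card (W j) = j" for j
  proof -
    have "inj_on a {j..<2*j}" using amono strict_mono_imp_inj_on by blast
    then show ?thesis unfolding W_def by (simp add: card_image)
  qed
  define C where "C j = {x::nat\<Rightarrow>bool. \<forall>w\<in>W j. \<forall>w'\<in>W j. x w = x w'}" for j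
  have Ceq: "C j = {x. \<forall>i\<in>W j. x i = True} \<union> {x. \<forall>i\<in>W j. x i = False}" for j
    unfolding C_def by auto
  have Tsets: "{x. \<forall>i\<in>W j. x i = c} \<in> sets cantor_measure" for j c
    using cyl_sets[OF finW, of j "\<lambda>_. c"] by simp
  have Tmeas: "measure cantor_measure {x. \<forall>i\<in>W j. x i = c} = (1/2)^j" for j c
    using cyl_measure[OF finW, of j "\<lambda>_. c"] cardW by simp
  have Csets: "C j \<in> sets cantor_measure" for j
    unfolding Ceq using Tsets by blast
  have Cmeas: "measure cantor_measure (C j) \<le> 2 * (1/2)^j" for j
  proof -
    have "measure cantor_measure (C j) \<le> measure cantor_measure {x. \<forall>i\<in>W j. x i = True}
        + measure cantor_measure {x. \<forall>i\<in>W j. x i = False}"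
      unfolding Ceq by (rule measure_subadditive[OF Tsets Tsets]) (simp_all add: P.emeasure_finite)
    also have "\<dots> = 2 * (1/2)^j" unfolding Tmeas by simp
    finally show ?thesis .
  qed
  have summ: "summable (\<lambda>j. measure cantor_measure (C j))"
  proof (rule summable_comparison_test')
    show "summable (\<lambda>j. 2 * (1/2::real)^j)" by (intro summable_mult summable_geometric) simp
    show "norm (measure cantor_measure (C j)) \<le> 2 * (1/2)^j" for j using Cmeas[of j] by simp
  qed
  have null: "limsup C \<in> null_sets cantor_measure"
    by (rule borel_cantelli_limsup1[OF Csets]) (auto simp: summ P.emeasure_finite less_top[symmetric])
  have sub: "{x. \<exists>\<^sub>\<infinity> n. restr x n \<in> YA A} \<subseteq> limsup C"
  proof
    fix x assume "x \<in> {x. \<exists>\<^sub>\<infinity> n. restr x n \<in> YA A}"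
    then have inf: "\<forall>m. \<exists>n\<ge>m. restr x n \<in> YA A" by (simp add: INFM_nat_le)
    have "x \<in> (\<Union>j\<in>{M..}. C j)" for M
    proof -
      obtain n where n: "n \<ge> a (2*M)" "restr x n \<in> YA A" using inf by blast
      then obtain j where j: "a (2*j) \<le> n" "n < a (2*j+2)"
        and cst: "\<forall>w\<in>W j. \<forall>w'\<in>W j. restr x n ! w = restr x n ! w'"
        unfolding YA_def W_def a_def by (auto simp: length_restr)
      have "a (2*M) < a (2*j+2)" using n(1) j(2) by linarith
      then have "M \<le> j" using amono by (simp add: strict_mono_less)
      moreover have "x \<in> C j"
      proof -
        have "w < n" if "w \<in> W j" for w
        proof -
          from that obtain k where "k < 2*j" "w = a k" unfolding W_def by auto
          then have "w < a (2*j)" using amono by (simp add: strict_mono_less)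
          then show ?thesis using j(1) by linarith
        qed
        then have eq: "restr x n ! w = x w" if "w \<in> W j" for w using that by simp
        show ?thesis unfolding C_def mem_Collect_eq
        proof (intro ballI)
          fix w w' assume "w \<in> W j" "w' \<in> W j"
          then show "x w = x w'" using cst eq by metis
        qed
      qed
      ultimately show ?thesis by auto
    qed
    then show "x \<in> limsup C" unfolding limsup_INF_SUP by auto
  qed
  show ?thesis unfolding trN_def lebesgue_null_def using null sub by auto
qed



lemma finite_bounded_nat: "finite (S::nat set) \<Longrightarrow> \<exists>B. \<forall>n\<in>S. n \<le> B"
  using finite_nat_set_iff_bounded_le by blast

lemma main1:
  assumes infX: "infinite X" and infA: "infinite A" and fin: "finite (X \<inter> YA A)"
  shows "splits A (sig0 X) \<or> splits A (Ev X)"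
proof (rule ccontr)
  assume "\<not> (splits A (sig0 X) \<or> splits A (Ev X))"
  then have ns0: "\<not> splits A (sig0 X)" and ns1: "\<not> splits A (Ev X)" by auto
  define a where "a = enumerate A"
  have amono: "strict_mono a" unfolding a_def using infA by (rule strict_mono_enumerate)
  have ainA: "a i \<in> A" for i unfolding a_def using infA by (rule enumerate_in_set)
  have age: "i \<le> a i" for i unfolding a_def using infA by (rule le_enumerate)
  have "\<exists>c i0. \<forall>i\<ge>i0. acc X (a i) = c"
  proof (cases "finite (A \<inter> sig0 X)")
    case True
    then obtain B where B: "\<forall>n\<in>A \<inter> sig0 X. n \<le> B" using finite_bounded_nat by blast
    have "\<forall>i\<ge>Suc B. acc X (a i) = False"
    proof (intro allI impI)
      fix i assume "i \<ge> Suc B"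
      then have "a i > B" using age[of i] by linarith
      then have "a i \<notin> sig0 X" using B ainA[of i] by (meson IntI leD)
      then show "acc X (a i) = False" unfolding sig0_def by simp
    qed
    then show ?thesis by blast
  next
    case False
    then have "finite (A - sig0 X)" using ns0 unfolding splits_def by blast
    then obtain B where B: "\<forall>n\<in>A - sig0 X. n \<le> B" using finite_bounded_nat by blast
    have "\<forall>i\<ge>Suc B. acc X (a i) = True"
    proof (intro allI impI)
      fix i assume "i \<ge> Suc B"
      then have "a i > B" using age[of i] by linarith
      then have "a i \<in> sig0 X" using B ainA[of i] by (meson DiffI leD)
      then show "acc X (a i) = True" unfolding sig0_def by simp
    qed
    then show ?thesis by blast
  qed
  then obtain c i0 where c: "\<And>i. i \<ge> i0 \<Longrightarrow> acc X (a i) = c" by blast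
  have jumps: "\<exists>i\<ge>i1. rho X (a i) < a (Suc i)" for i1
  proof (rule ccontr)
    assume "\<not> (\<exists>i\<ge>i1. rho X (a i) < a (Suc i))"
    then have nj: "\<And>i. i \<ge> i1 \<Longrightarrow> a (Suc i) \<le> rho X (a i)" by (meson not_le)
    define f where "f i = idx X (a i)" for i
    have fstep: "f (Suc i) \<le> Suc (f i)" if "i \<ge> i1" for i
    proof -
      have "a i < qs X (Suc (f i))" unfolding f_def by (rule idx_upper)
      then have "rho X (a i) < rho' X (qs X (Suc (f i)))" by (intro rho'_gt) simp
      then have "a (Suc i) < qs X (Suc (Suc (f i)))" using nj[OF that] by simp
      then show ?thesis unfolding f_def by (rule idx_le)
    qed
    have fbig: "\<exists>i\<ge>i1. v \<le> f i" for v
    proof -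
      define i where "i = max i1 (qs X v)"
      have "qs X v \<le> a i" using age[of i] unfolding i_def by linarith
      then have "v \<le> f i" unfolding f_def by (rule idx_ge)
      then show ?thesis unfolding i_def by (intro exI[of _ "max i1 (qs X v)"]) auto
    qed
    have hit: "\<exists>i. f i = v" if "v \<ge> f i1" for v
    proof -
      define P where "P i \<longleftrightarrow> i \<ge> i1 \<and> v \<le> f i" for i
      have exP: "\<exists>i. P i" using fbig unfolding P_def by blast
      define i where "i = (LEAST i. P i)"
      have Pi: "P i" unfolding i_def by (rule LeastI_ex[OF exP])
      show ?thesis
      proof (cases "i = i1")
        case True
        then show ?thesis using Pi that unfolding P_def by (intro exI[of _ i]) simp
      next
        case False
        with Pi have "i > i1" unfolding P_def by simp
        then obtain i' where i': "i = Suc i'" "i' \<ge> i1" by (metis Suc_le_eq less_imp_Suc_add le_add1 add_Suc_right)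
        have "\<not> P i'" using i' not_less_Least[of i' P] unfolding i_def by auto
        then have "f i' < v" using i' unfolding P_def by simp
        then have "f i \<le> v" using fstep[OF i'(2)] i'(1) by simp
        then show ?thesis using Pi unfolding P_def by (intro exI[of _ i]) simp
      qed
    qed
    have "infinite (A \<inter> Ev X)"
      unfolding infinite_nat_iff_unbounded_le
    proof
      fix m
      obtain i where i: "f i = 2 * (m + f i1)" using hit by fastforce
      have "a i \<in> Ev X" using i unfolding Ev_def f_def by simp
      moreover have "m \<le> a i"
      proof -
        have "m \<le> f i" using i by simp
        also have "f i \<le> a i" unfolding f_def by (rule idx_le_self)
        finally show ?thesis .
      qed
      ultimately show "\<exists>n\<ge>m. n \<in> A \<inter> Ev X" using ainA by blast
    qed
    moreover have "infinite (A - Ev X)"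
      unfolding infinite_nat_iff_unbounded_le
    proof
      fix m
      obtain i where i: "f i = 2 * (m + f i1) + 1" using hit by fastforce
      have "a i \<notin> Ev X" using i unfolding Ev_def f_def by simp
      moreover have "m \<le> a i"
      proof -
        have "m \<le> f i" using i by simp
        also have "f i \<le> a i" unfolding f_def by (rule idx_le_self)
        finally show ?thesis .
      qed
      ultimately show "\<exists>n\<ge>m. n \<in> A - Ev X" using ainA by blast
    qed
    ultimately show False using ns1 unfolding splits_def by blast
  qed
  obtain L where L: "\<forall>t\<in>X \<inter> YA A. length t \<le> L"
    using finite_bounded_nat[OF finite_imageI[OF fin, of length]] by auto
  obtain i where i: "i \<ge> 2*i0 + Suc L" "rho X (a i) < a (Suc i)" using jumps by blast
  obtain t where t: "t \<in> X" "take (a i) t = restr (acc X) (a i)" "length t = rho X (a i)"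
    using rho_ex[OF infX] by blast
  have lt: "a i \<le> length t"
  proof -
    have "length (take (a i) t) = a i" using t(2) by simp
    then show ?thesis by simp
  qed
  define j where "j = i div 2"
  have j1: "2*j \<le> i" and j2: "Suc i \<le> 2*j+2" and j3: "i0 \<le> j" using i(1) unfolding j_def by auto
  have "t \<in> YA A"
    unfolding YA_def mem_Collect_eq
  proof (intro exI[of _ j] conjI)
    show "enumerate A (2*j) \<le> length t"
      using lt strict_mono_less_eq[OF amono] j1 unfolding a_def by (meson order_trans)
    show "length t < enumerate A (2*j+2)"
    proof -
      have "a (Suc i) \<le> a (2*j+2)" using j2 strict_mono_less_eq[OF amono] by blast
      then show ?thesis using t(3) i(2) unfolding a_def by linarith
    qed
    have tw: "t ! w = c" if "w \<in> enumerate A ` {j..<2*j}" for w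
    proof -
      from that obtain k where k: "j \<le> k" "k < 2*j" "w = a k" unfolding a_def by auto
      have "a k < a i" using k j1 amono by (simp add: strict_mono_less)
      then have "t ! w = take (a i) t ! w" using k by simp
      also have "\<dots> = acc X w" using t(2) \<open>a k < a i\<close> k by simp
      also have "\<dots> = c" using c[of k] k j3 by simp
      finally show ?thesis .
    qed
    show "\<forall>w\<in>enumerate A ` {j..<2 * j}. \<forall>w'\<in>enumerate A ` {j..<2 * j}. t ! w = t ! w'"
      using tw by simp
  qed
  then have "length t \<le> L" using L t(1) by blast
  moreover have "L < a i" using age[of i] i(1) by linarith
  ultimately show False using lt by linarith
qed

lemma finite_not_splitting:
  assumes "finite S"
  shows "infinite B \<Longrightarrow> \<exists>A\<subseteq>B. infinite A \<and> (\<forall>s\<in>S. \<not> splits A s)"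
  using assms
proof (induction S arbitrary: B rule: finite_induct)
  case empty then show ?case by blast
next
  case (insert s S)
  obtain A where A: "A \<subseteq> B" "infinite A" "\<forall>s\<in>S. \<not> splits A s" using insert by blast
  define A' where "A' = (if infinite (A \<inter> s) then A \<inter> s else A - s)"
  have inf': "infinite A'"
  proof (cases "infinite (A \<inter> s)")
    case True then show ?thesis unfolding A'_def by simp
  next
    case False
    then have "infinite (A - s)" using A(2) by (metis Int_Diff_Un finite_Un)
    with False show ?thesis unfolding A'_def by simp
  qed
  have sub: "A' \<subseteq> A" unfolding A'_def by auto
  have e1: "A \<inter> s - s = {}" and e2: "(A - s) \<inter> s = {}" by auto
  have "\<not> splits A' s"
  proof (cases "infinite (A \<inter> s)")
    case True
    then have "A' - s = {}" unfolding A'_def using e1 by simp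
    then show ?thesis unfolding splits_def by (metis finite.emptyI)
  next
    case False
    then have "A' \<inter> s = {}" unfolding A'_def using e2 by simp
    then show ?thesis unfolding splits_def by (metis finite.emptyI)
  qed
  moreover have "\<not> splits A' s'" if "s' \<in> S" for s'
  proof -
    have "\<not> splits A s'" using A(3) that by blast
    then show ?thesis unfolding splits_def using sub
      by (meson Diff_mono Int_mono finite_subset order_refl)
  qed
  ultimately show ?case using sub A(1) inf' by blast
qed



lemma two_images_lepoll:
  assumes "infinite F"
  shows "f ` F \<union> g ` F \<lesssim> F"
proof -
  have "ordLeq3 (card_of (f ` F \<union> g ` F)) (card_of F)"
    by (rule card_of_Un_ordLeq_infinite_Field[where r="card_of F", unfolded Field_card_of])
       (use assms in \<open>auto simp: card_of_image card_of_Card_order card_of_card_order_on\<close>)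
  then show ?thesis by (simp add: lepoll_def card_of_ordLeq[symmetric])
qed

theorem mainTheorem16:
  shows "(\<forall>F. non_star_family trN F \<longrightarrow> (\<exists>S. splitting_family S \<and> S \<lesssim> F))
       \<and> (\<forall>F. non_star_family densZ F \<longrightarrow> (\<exists>G. non_star_family trN G \<and> G \<lesssim> F))"
proof (intro conjI allI impI)
  fix F assume F: "non_star_family trN F"
  then have infF: "\<And>X. X \<in> F \<Longrightarrow> infinite X" and wit: "\<And>Y. Y \<in> trN \<Longrightarrow> \<exists>X\<in>F. finite (X \<inter> Y)"
    unfolding non_star_family_def by auto
  define S where "S = sig0 ` F \<union> Ev ` F"
  have spl: "\<exists>s\<in>S. splits A s" if A: "infinite A" for A
  proof -
    obtain X where X: "X \<in> F" "finite (X \<inter> YA A)" using wit[OF YA_trN[OF A]] by blast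
    then have "splits A (sig0 X) \<or> splits A (Ev X)" using main1[OF infF[OF X(1)] A] by blast
    then show ?thesis using X(1) unfolding S_def by blast
  qed
  have "splitting_family S" unfolding splitting_family_def using spl unfolding splits_def by blast
  moreover have "infinite F"
  proof
    assume "finite F"
    then have "finite S" unfolding S_def by simp
    then obtain A where A: "infinite A" "\<forall>s\<in>S. \<not> splits A s"
      using finite_not_splitting[of S "UNIV::nat set"] by auto
    then show False using spl[OF A(1)] by blast
  qed
  then have "S \<lesssim> F" unfolding S_def by (rule two_images_lepoll)
  ultimately show "\<exists>S. splitting_family S \<and> S \<lesssim> F" by blast
next
  fix F assume F: "non_star_family densZ F"
  then have infF: "\<And>X. X \<in> F \<Longrightarrow> infinite X" and wit: "\<And>Y. Y \<in> densZ \<Longrightarrow> \<exists>X\<in>F. finite (X \<inter> Y)"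
    unfolding non_star_family_def by auto
  define G where "G = (\<lambda>X. enc -` X) ` F"
  have "G \<lesssim> F" unfolding G_def by (rule image_lepoll)
  moreover have "non_star_family trN G"
    unfolding non_star_family_def
  proof (intro conjI ballI)
    fix Z assume "Z \<in> G"
    then obtain X where X: "X \<in> F" "Z = enc -` X" unfolding G_def by blast
    show "infinite Z"
    proof
      assume "finite Z"
      then have "finite (enc ` (enc -` X))" using X(2) by (metis finite_imageI)
      then have "finite X" using enc_surj by (simp add: surj_image_vimage_eq)
      with infF[OF X(1)] show False by simp
    qed
  next
    fix Y assume Y: "Y \<in> trN"
    obtain X where X: "X \<in> F" "finite (X \<inter> enc ` Y)" using wit[OF enc_dens[OF Y]] by blast
    have "enc -` X \<inter> Y \<subseteq> enc -` (X \<inter> enc ` Y)" by auto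
    moreover have "finite (enc -` (X \<inter> enc ` Y))"
      using X(2) enc_inj by (intro finite_vimageI) auto
    ultimately have "finite (enc -` X \<inter> Y)" by (rule finite_subset)
    then show "\<exists>Z\<in>G. finite (Z \<inter> Y)" using X(1) unfolding G_def by blast
  qed
  ultimately show "\<exists>G. non_star_family trN G \<and> G \<lesssim> F" by blast
qed

end
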